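(* Let $\mu$ be a partition of $n+k$ and $(i,j)$ a cell of $\mu$. Define $$I^k_{i,j}=\{P\in\mathbb{Q}[X_n,Y_n]: P(\partial)Q=0\ \text{for all } Q\in M^k_{i,j}\}.$$ Then $$I^k_{i,j}=\bigcap_{(a_1,b_1),\dots,(a_k,b_k)} I_{\partial x_{n+1}^{a_1}\partial y_{n+1}^{b_1}\cdots\partial x_{n+k}^{a_k}\partial y_{n+k}^{b_k}\Delta_\mu}\ \cap\ \mathbb{Q}[X_n,Y_n],$$ where the intersection runs over all $k$-tuples of distinct cells of $S_\mu(i,j)$ listed in increasing order. Here $\Delta_\mu=\Delta_\mu(X_{n+k},Y_{n+k})$, and for a polynomial $R\in\mathbb{Q}[X_{n+k},Y_{n+k}]$, $I_R$ denotes the set of $P\in\mathbb{Q}[X_{n+k},Y_{n+k}]$ such that $P(\partial)$ kills every partial derivative of $R$.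
   Context: Write $X_m=(x_1,\dots,x_m)$ and $Y_m=(y_1,\dots,y_m)$. For a partition $\mu=(\mu_1\ge\dots\ge\mu_h>0)$, its Ferrers diagram is $\{(a,b):0\le a\le h-1,\ 0\le b\le\mu_{a+1}-1\}$. Cells are ordered by $(p,q)<(p',q')$ iff $q<q'$, or $q=q'$ and $p<p'$. For a lattice diagram $L$ (a finite subset of $\mathbb{N}^2$) with cells $(p_1,q_1)<\dots<(p_m,q_m)$, set $\Delta_L=\det(x_r^{p_t}y_r^{q_t})_{1\le r,t\le m}\in\mathbb{Q}[X_m,Y_m]$, and let $M_L$ be the span of all partial derivatives of $\Delta_L$. For a polynomial $P$, $P(\partial)$ substitutes $\partial/\partial x_r$ and $\partial/\partial y_r$ for $x_r$ and $y_r$. The shadow is $S_\mu(i,j)=\{(a,b)\in\mu:a\ge i,\ b\ge j\}$. The space $M^k_{i,j}=\sum M_{\mu\setminus\{c_1,\dots,c_k\}}\subseteq\mathbb{Q}[X_n,Y_n]$, summed over all sets of $k$ distinct cells of $S_\mu(i,j)$. *)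

theory Defs
  imports Complex_Main "HOL-Library.Poly_Mapping" "HOL-Combinatorics.Permutations"
begin

text \<open>Variables: X r stands for the paper's x_(r+1), Y r for y_(r+1) (0-based indices).\<close>
datatype var = X nat | Y nat

fun var_idx :: "var \<Rightarrow> nat" where
  "var_idx (X r) = r" | "var_idx (Y r) = r"

type_synonym mono = "var \<Rightarrow>\<^sub>0 nat"
type_synonym qpoly = "mono \<Rightarrow>\<^sub>0 rat"

text \<open>Q[X_m,Y_m]: polynomials involving only x_1..x_m, y_1..y_m (indices < m here).\<close>
definition polys :: "nat \<Rightarrow> qpoly set" where
  "polys m = {P :: qpoly. \<forall>\<alpha>\<in>Poly_Mapping.keys P. \<forall>v\<in>Poly_Mapping.keys \<alpha>. var_idx v < m}"

definition smul :: "rat \<Rightarrow> qpoly \<Rightarrow> qpoly" where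
  "smul c Q = Poly_Mapping.map (\<lambda>a. c * a) Q"

definition pd :: "var \<Rightarrow> qpoly \<Rightarrow> qpoly" where
  "pd v P = (\<Sum>m\<in>Poly_Mapping.keys P. Poly_Mapping.single (m - Poly_Mapping.single v 1)
                                   (Poly_Mapping.lookup P m * of_nat (Poly_Mapping.lookup m v)))"

text \<open>The differential operator d^alpha (partial derivatives commute, so the order
  in which the variables are processed is irrelevant).\<close>
definition pdiff :: "mono \<Rightarrow> qpoly \<Rightarrow> qpoly" where
  "pdiff \<alpha> Q = foldr (\<lambda>v. pd v ^^ Poly_Mapping.lookup \<alpha> v)
                 (SOME vs. distinct vs \<and> set vs = Poly_Mapping.keys \<alpha>) Q"

text \<open>P(d) Q: substitute d/dx_r, d/dy_r for x_r, y_r in P and apply to Q.\<close>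
definition apply_op :: "qpoly \<Rightarrow> qpoly \<Rightarrow> qpoly" where
  "apply_op P Q = (\<Sum>\<alpha>\<in>Poly_Mapping.keys P. smul (Poly_Mapping.lookup P \<alpha>) (pdiff \<alpha> Q))"

inductive_set derivs :: "qpoly \<Rightarrow> qpoly set" for R where
  self: "R \<in> derivs R"
| step: "Q \<in> derivs R \<Longrightarrow> pd v Q \<in> derivs R"

definition qspan :: "qpoly set \<Rightarrow> qpoly set" where
  "qspan S = {(\<Sum>q\<in>F. smul (c q) q) | F c. finite F \<and> F \<subseteq> S}"

definition cell_less :: "nat \<times> nat \<Rightarrow> nat \<times> nat \<Rightarrow> bool" where
  "cell_less c d \<longleftrightarrow> snd c < snd d \<or> (snd c = snd d \<and> fst c < fst d)"

definition cells_sorted :: "(nat \<times> nat) set \<Rightarrow> (nat \<times> nat) list" where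
  "cells_sorted L = (THE cs. distinct cs \<and> set cs = L \<and> sorted_wrt cell_less cs)"

text \<open>Delta_L = det (x_r^(p_t) y_r^(q_t)), r,t ranging over 0..m-1.\<close>
definition Delta :: "(nat \<times> nat) set \<Rightarrow> qpoly" where
  "Delta L = (let cs = cells_sorted L; m = length cs in
     (\<Sum>\<sigma>\<in>{\<sigma>. \<sigma> permutes {0..<m}}.
        Poly_Mapping.single
          (\<Sum>r<m. Poly_Mapping.single (X r) (fst (cs ! \<sigma> r))
                 + Poly_Mapping.single (Y r) (snd (cs ! \<sigma> r)))
          (of_int (sign \<sigma>))))"

definition M :: "(nat \<times> nat) set \<Rightarrow> qpoly set" where
  "M L = qspan (derivs (Delta L))"

definition I_of :: "nat \<Rightarrow> qpoly \<Rightarrow> qpoly set" where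
  "I_of N R = {P \<in> polys N. \<forall>Q\<in>derivs R. apply_op P Q = 0}"

definition is_partition :: "nat list \<Rightarrow> bool" where
  "is_partition \<mu> \<longleftrightarrow> sorted_wrt (\<ge>) \<mu> \<and> (\<forall>x\<in>set \<mu>. 0 < x)"

definition ferrers :: "nat list \<Rightarrow> (nat \<times> nat) set" where
  "ferrers \<mu> = {(a, b). a < length \<mu> \<and> b < \<mu> ! a}"

definition shadow :: "nat list \<Rightarrow> nat \<Rightarrow> nat \<Rightarrow> (nat \<times> nat) set" where
  "shadow \<mu> i j = {(a, b) \<in> ferrers \<mu>. i \<le> a \<and> j \<le> b}"

text \<open>M^k_{i,j}: sum of the spaces M_{mu minus C} over k-subsets C of the shadow
  (a sum of subspaces is the span of their union).\<close>
definition Mk :: "nat list \<Rightarrow> nat \<Rightarrow> nat \<Rightarrow> nat \<Rightarrow> qpoly set" where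
  "Mk \<mu> k i j = qspan (\<Union> {M (ferrers \<mu> - C) | C. C \<subseteq> shadow \<mu> i j \<and> card C = k})"

definition Ik :: "nat list \<Rightarrow> nat \<Rightarrow> nat \<Rightarrow> nat \<Rightarrow> nat \<Rightarrow> qpoly set" where
  "Ik \<mu> n k i j = {P \<in> polys n. \<forall>Q\<in>Mk \<mu> k i j. apply_op P Q = 0}"

text \<open>The operator dx_{n+1}^{a_1} dy_{n+1}^{b_1} ... dx_{n+k}^{a_k} dy_{n+k}^{b_k}
  for the list of cells cs = [(a_1,b_1),...,(a_k,b_k)] (0-based variable n+t).\<close>
definition shift_mono :: "nat \<Rightarrow> (nat \<times> nat) list \<Rightarrow> mono" where
  "shift_mono n cs = (\<Sum>t<length cs. Poly_Mapping.single (X (n + t)) (fst (cs ! t))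
                                    + Poly_Mapping.single (Y (n + t)) (snd (cs ! t)))"

end

theory Submission
  imports Defs "HOL-Library.Product_Lexorder"
begin

lemma lookup_smul[simp]: "Poly_Mapping.lookup (smul c Q) m = c * Poly_Mapping.lookup Q m"
  unfolding smul_def by transfer (auto simp: when_def)

lemma lookup_pd: "Poly_Mapping.lookup (pd v P) m =
   Poly_Mapping.lookup P (m + Poly_Mapping.single v 1) * of_nat (Poly_Mapping.lookup m v + 1)"
proof -
  let ?d = "Poly_Mapping.single v (1::nat)"
  have "Poly_Mapping.lookup (pd v P) m =
     (\<Sum>m'\<in>Poly_Mapping.keys P. if m' - ?d = m then Poly_Mapping.lookup P m' * of_nat (Poly_Mapping.lookup m' v) else 0)"
    unfolding pd_def lookup_sum by (intro sum.cong refl) (simp add: lookup_single when_def)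
  also have "\<dots> = (\<Sum>m'\<in>Poly_Mapping.keys P. if m' = m + ?d then Poly_Mapping.lookup P m' * of_nat (Poly_Mapping.lookup m v + 1) else 0)"
  proof (intro sum.cong refl)
    fix m' assume "m' \<in> Poly_Mapping.keys P"
    show "(if m' - ?d = m then Poly_Mapping.lookup P m' * of_nat (Poly_Mapping.lookup m' v) else 0) =
          (if m' = m + ?d then Poly_Mapping.lookup P m' * of_nat (Poly_Mapping.lookup m v + 1) else 0)"
    proof (cases "m' = m + ?d")
      case True
      then show ?thesis by (simp add: lookup_add)
    next
      case False
      have "Poly_Mapping.lookup m' v = 0" if "m' - ?d = m"
      proof (rule ccontr)
        assume "Poly_Mapping.lookup m' v \<noteq> 0"
        then have "m' = m + ?d" using that
          by (intro poly_mapping_eqI) (auto simp: lookup_add lookup_minus lookup_single when_def)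
        with False show False by simp
      qed
      with False show ?thesis by auto
    qed
  qed
  also have "\<dots> = Poly_Mapping.lookup P (m + ?d) * of_nat (Poly_Mapping.lookup m v + 1)"
    by (cases "m + ?d \<in> Poly_Mapping.keys P") (auto simp: in_keys_iff)
  finally show ?thesis .
qed

lemma pd_add: "pd v (a + b) = pd v a + pd v b"
  by (intro poly_mapping_eqI) (simp add: lookup_pd lookup_add algebra_simps)
lemma pd_zero[simp]: "pd v 0 = 0"
  by (intro poly_mapping_eqI) (simp add: lookup_pd)
lemma pd_smul: "pd v (smul c a) = smul c (pd v a)"
  by (intro poly_mapping_eqI) (simp add: lookup_pd algebra_simps)
lemma pd_sum: "pd v (sum f A) = (\<Sum>x\<in>A. pd v (f x))"
  by (induction A rule: infinite_finite_induct) (auto simp: pd_add)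
lemma pd_comm: "pd u (pd v a) = pd v (pd u a)"
  by (intro poly_mapping_eqI) (auto simp: lookup_pd lookup_add lookup_single when_def algebra_simps)

lemma smul_add: "smul c (a + b) = smul c a + smul c b"
  by (intro poly_mapping_eqI) (simp add: lookup_add algebra_simps)
lemma smul_zero[simp]: "smul c 0 = 0"
  by (intro poly_mapping_eqI) simp
lemma smul_sum: "smul c (sum f A) = (\<Sum>x\<in>A. smul c (f x))"
  by (induction A rule: infinite_finite_induct) (auto simp: smul_add)
lemma smul_smul: "smul c (smul d a) = smul (c*d) a"
  by (intro poly_mapping_eqI) simp
lemma smul_one[simp]: "smul 1 a = a"
  by (intro poly_mapping_eqI) simp
lemma smul_single: "smul c (Poly_Mapping.single m d) = Poly_Mapping.single m (c * d)"
  by (intro poly_mapping_eqI) (simp add: lookup_single when_def)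

definition lin :: "(qpoly \<Rightarrow> qpoly) \<Rightarrow> bool" where
  "lin f \<longleftrightarrow> (\<forall>a b. f (a + b) = f a + f b) \<and> (\<forall>c a. f (smul c a) = smul c (f a))"

lemma lin_zero: "lin f \<Longrightarrow> f 0 = 0"
  unfolding lin_def by (metis add_cancel_right_right add_0)
lemma lin_sum: "lin f \<Longrightarrow> f (sum g A) = (\<Sum>x\<in>A. f (g x))"
  by (induction A rule: infinite_finite_induct) (auto simp: lin_zero, simp add: lin_def)
lemma lin_pd: "lin (pd v)" unfolding lin_def by (simp add: pd_add pd_smul)
lemma lin_comp: "lin f \<Longrightarrow> lin g \<Longrightarrow> lin (f \<circ> g)" unfolding lin_def by simp
lemma lin_id: "lin id" unfolding lin_def by simp
lemma lin_funpow: "lin f \<Longrightarrow> lin (f ^^ n)"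
  by (induction n) (auto simp: lin_id intro: lin_comp)
lemma lin_foldr: "(\<And>v. lin (g v)) \<Longrightarrow> lin (foldr g vs)"
  by (induction vs) (auto simp: lin_id intro: lin_comp)

lemma lin_pdiff: "lin (pdiff \<alpha>)"
proof -
  have "lin (foldr (\<lambda>v. pd v ^^ Poly_Mapping.lookup \<alpha> v) vs)" for vs
    by (rule lin_foldr) (rule lin_funpow[OF lin_pd])
  then show ?thesis unfolding lin_def pdiff_def by simp
qed

lemma comm_funpow: "(\<And>x. f (g x) = g (f x)) \<Longrightarrow> f ((g ^^ n) x) = (g ^^ n) (f x)"
  by (induction n) auto
lemma comm_foldr: "(\<And>v x. f (g v x) = g v (f x)) \<Longrightarrow> f (foldr g vs x) = foldr g vs (f x)"
  by (induction vs arbitrary: x) auto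

lemma pd_pdiff: "pd v (pdiff \<alpha> Q) = pdiff \<alpha> (pd v Q)"
  unfolding pdiff_def by (rule comm_foldr, rule comm_funpow, rule pd_comm)

lemma apply_op_def': "apply_op P Q = (\<Sum>\<alpha>\<in>Poly_Mapping.keys P. smul (Poly_Mapping.lookup P \<alpha>) (pdiff \<alpha> Q))"
  by (simp add: apply_op_def)

lemma lin_apply_op: "lin (apply_op P)"
  using lin_pdiff unfolding lin_def apply_op_def
  by (auto simp: smul_add sum.distrib smul_sum smul_smul mult.commute intro!: sum.cong)

lemma pd_apply_op: "pd v (apply_op P Q) = apply_op P (pd v Q)"
  unfolding apply_op_def pd_sum by (simp add: pd_smul pd_pdiff)

lemma apply_op_pdiff: "apply_op P (pdiff \<alpha> Q) = pdiff \<alpha> (apply_op P Q)"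
  unfolding pdiff_def by (rule comm_foldr, rule comm_funpow, rule pd_apply_op[symmetric])

lemma derivs_kill: "Q \<in> derivs R \<Longrightarrow> apply_op P R = 0 \<Longrightarrow> apply_op P Q = 0"
  by (induction rule: derivs.induct) (auto simp flip: pd_apply_op)

lemma kills_iff: "(\<forall>Q\<in>derivs R. apply_op P Q = 0) \<longleftrightarrow> apply_op P R = 0"
  using derivs_kill derivs.self by blast


definition lowm :: "nat \<Rightarrow> mono \<Rightarrow> mono" where
  "lowm n m = Abs_poly_mapping (\<lambda>v. if var_idx v < n then Poly_Mapping.lookup m v else 0)"
definition highm :: "nat \<Rightarrow> mono \<Rightarrow> mono" where
  "highm n m = Abs_poly_mapping (\<lambda>v. if var_idx v < n then 0 else Poly_Mapping.lookup m v)"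

lemma lookup_lowm: "Poly_Mapping.lookup (lowm n m) v = (if var_idx v < n then Poly_Mapping.lookup m v else 0)"
proof -
  have "finite {v. (if var_idx v < n then Poly_Mapping.lookup m v else 0) \<noteq> 0}"
    by (rule finite_subset[OF _ finite_lookup[of m]]) auto
  then show ?thesis unfolding lowm_def by simp
qed
lemma lookup_highm: "Poly_Mapping.lookup (highm n m) v = (if var_idx v < n then 0 else Poly_Mapping.lookup m v)"
proof -
  have "finite {v. (if var_idx v < n then 0 else Poly_Mapping.lookup m v) \<noteq> 0}"
    by (rule finite_subset[OF _ finite_lookup[of m]]) auto
  then show ?thesis unfolding highm_def by simp
qed

lemma low_high: "lowm n m + highm n m = m"
  by (intro poly_mapping_eqI) (simp add: lookup_add lookup_lowm lookup_highm)
lemma highm_add: "highm n (a + b) = highm n a + highm n b"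
  by (intro poly_mapping_eqI) (simp add: lookup_add lookup_highm)
lemma lowm_add: "lowm n (a + b) = lowm n a + lowm n b"
  by (intro poly_mapping_eqI) (simp add: lookup_add lookup_lowm)
lemma highm_sum: "highm n (sum f A) = (\<Sum>x\<in>A. highm n (f x))"
  by (intro poly_mapping_eqI) (simp add: lookup_sum lookup_highm)
lemma lowm_sum: "lowm n (sum f A) = (\<Sum>x\<in>A. lowm n (f x))"
  by (intro poly_mapping_eqI) (simp add: lookup_sum lookup_lowm)
lemma highm_single: "highm n (Poly_Mapping.single v e) = (if var_idx v < n then 0 else Poly_Mapping.single v e)"
  by (intro poly_mapping_eqI) (simp add: lookup_highm lookup_single when_def)
lemma lowm_single: "lowm n (Poly_Mapping.single v e) = (if var_idx v < n then Poly_Mapping.single v e else 0)"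
  by (intro poly_mapping_eqI) (simp add: lookup_lowm lookup_single when_def)
lemma highm_highm: "highm n (highm n m) = highm n m"
  by (intro poly_mapping_eqI) (simp add: lookup_highm)
lemma highm_lowm: "highm n (lowm n m) = 0"
  by (intro poly_mapping_eqI) (simp add: lookup_highm lookup_lowm)
lemma lowm_highm: "lowm n (highm n m) = 0"
  by (intro poly_mapping_eqI) (simp add: lookup_highm lookup_lowm)
lemma lowm_eq: "highm n m = 0 \<Longrightarrow> lowm n m = m"
  by (metis low_high add_0_right)
lemma highm_eq_zero: "highm n m = 0 \<longleftrightarrow> (\<forall>v. n \<le> var_idx v \<longrightarrow> Poly_Mapping.lookup m v = 0)"
  by (auto simp: poly_mapping_eq_iff fun_eq_iff lookup_highm)

definition E :: "nat \<Rightarrow> mono \<Rightarrow> qpoly \<Rightarrow> qpoly" where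
  "E n h Q = Abs_poly_mapping (\<lambda>m'. if highm n m' = 0 then Poly_Mapping.lookup Q (m' + h) else 0)"

lemma lookup_E: "Poly_Mapping.lookup (E n h Q) m' = (if highm n m' = 0 then Poly_Mapping.lookup Q (m' + h) else 0)"
proof -
  have "{m'. (if highm n m' = 0 then Poly_Mapping.lookup Q (m' + h) else 0) \<noteq> 0} \<subseteq> (\<lambda>m. m - h) ` Poly_Mapping.keys Q"
  proof
    fix m' assume "m' \<in> {m'. (if highm n m' = 0 then Poly_Mapping.lookup Q (m' + h) else 0) \<noteq> 0}"
    then have "m' + h \<in> Poly_Mapping.keys Q" by (auto simp: in_keys_iff split: if_splits)
    then show "m' \<in> (\<lambda>m. m - h) ` Poly_Mapping.keys Q" by (intro image_eqI[of _ _ "m' + h"]) auto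
  qed
  then have "finite {m'. (if highm n m' = 0 then Poly_Mapping.lookup Q (m' + h) else 0) \<noteq> 0}"
    by (rule finite_subset) auto
  then show ?thesis unfolding E_def by simp
qed

lemma lin_E: "lin (E n h)"
  unfolding lin_def by (auto intro!: poly_mapping_eqI simp: lookup_E lookup_add)

lemma E_single: "highm n h = h \<Longrightarrow>
   E n h (Poly_Mapping.single m c) = (if highm n m = h then Poly_Mapping.single (lowm n m) c else 0)"
proof (intro poly_mapping_eqI)
  fix m'
  assume hh: "highm n h = h"
  show "Poly_Mapping.lookup (E n h (Poly_Mapping.single m c)) m' =
        Poly_Mapping.lookup (if highm n m = h then Poly_Mapping.single (lowm n m) c else 0) m'"
  proof (cases "highm n m' = 0 \<and> m' + h = m")
    case True
    then have "highm n m = h" using hh by (auto simp: highm_add)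
    moreover have "lowm n m = m'" using True
    proof -
      have "lowm n h = 0" using hh lowm_highm by metis
      moreover have "lowm n m' = m'" using True lowm_eq by blast
      moreover have "m = m' + h" using True by simp
      ultimately show ?thesis by (simp add: lowm_add)
    qed
    ultimately show ?thesis using True by (simp add: lookup_E)
  next
    case False
    have "\<not> (highm n m = h \<and> lowm n m = m')"
    proof
      assume a: "highm n m = h \<and> lowm n m = m'"
      then have "m' + h = m" using low_high by metis
      moreover have "highm n m' = 0" using a highm_lowm by metis
      ultimately show False using False by simp
    qed
    then show ?thesis using False by (auto simp: lookup_E lookup_single when_def)
  qed
qed

lemma E_pd_low: "var_idx v < n \<Longrightarrow> highm n h = h \<Longrightarrow> E n h (pd v Q) = pd v (E n h Q)"
proof (intro poly_mapping_eqI)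
  fix m' assume v: "var_idx v < n" and hh: "highm n h = h"
  have hv: "Poly_Mapping.lookup h v = 0" using v hh by (metis lookup_highm)
  have e: "highm n (m' + Poly_Mapping.single v 1) = highm n m'" using v by (simp add: highm_add highm_single)
  have c: "m' + h + Poly_Mapping.single v 1 = m' + Poly_Mapping.single v 1 + h" by (metis add.assoc add.commute)
  show "Poly_Mapping.lookup (E n h (pd v Q)) m' = Poly_Mapping.lookup (pd v (E n h Q)) m'"
    using e c hv by (simp add: lookup_E lookup_pd lookup_add)
qed

lemma E_pd_high: "\<not> var_idx v < n \<Longrightarrow> E n h (pd v Q) =
   smul (of_nat (Poly_Mapping.lookup h v + 1)) (E n (h + Poly_Mapping.single v 1) Q)"
proof (intro poly_mapping_eqI)
  fix m' assume v: "\<not> var_idx v < n"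
  have "highm n m' = 0 \<Longrightarrow> Poly_Mapping.lookup m' v = 0" using v by (metis lookup_highm lookup_zero)
  then show "Poly_Mapping.lookup (E n h (pd v Q)) m' = Poly_Mapping.lookup (smul (of_nat (Poly_Mapping.lookup h v + 1)) (E n (h + Poly_Mapping.single v 1) Q)) m'"
    by (simp add: lookup_E lookup_pd lookup_add add.assoc)
qed

lemma E_funpow_high: "\<not> var_idx v < n \<Longrightarrow> \<exists>c. c \<noteq> 0 \<and> E n h ((pd v ^^ j) Q) = smul c (E n (h + Poly_Mapping.single v j) Q)"
proof (induction j arbitrary: h)
  case 0 then show ?case by (intro exI[of _ 1]) simp
next
  case (Suc j)
  obtain c where c: "c \<noteq> 0" "E n (h + Poly_Mapping.single v 1) ((pd v ^^ j) Q) = smul c (E n (h + Poly_Mapping.single v 1 + Poly_Mapping.single v j) Q)"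
    using Suc by blast
  have "E n h ((pd v ^^ Suc j) Q) = smul (of_nat (Poly_Mapping.lookup h v + 1) * c) (E n (h + Poly_Mapping.single v (Suc j)) Q)"
  proof -
    have s: "h + Poly_Mapping.single v 1 + Poly_Mapping.single v j = h + Poly_Mapping.single v (Suc j)"
      by (simp add: add.assoc single_add[symmetric])
    have c3: "E n (h + Poly_Mapping.single v 1) ((pd v ^^ j) Q) = smul c (E n (h + Poly_Mapping.single v (Suc j)) Q)"
      using c(2) unfolding s .
    have "E n h ((pd v ^^ Suc j) Q) = smul (of_nat (Poly_Mapping.lookup h v + 1)) (E n (h + Poly_Mapping.single v 1) ((pd v ^^ j) Q))"
      using E_pd_high[OF Suc.prems] by simp
    then show ?thesis unfolding c3 smul_smul .
  qed
  then show ?case using c(1) by (intro exI[of _ "of_nat (Poly_Mapping.lookup h v + 1) * c"]) simp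
qed

lemma E_foldr_high: "(\<forall>v\<in>set vs. \<not> var_idx v < n) \<Longrightarrow> \<exists>c. c \<noteq> 0 \<and>
   E n h (foldr (\<lambda>v. pd v ^^ g v) vs Q) = smul c (E n (h + (\<Sum>v\<leftarrow>vs. Poly_Mapping.single v (g v))) Q)"
proof (induction vs arbitrary: h)
  case Nil then show ?case by (intro exI[of _ 1]) simp
next
  case (Cons v vs)
  obtain c1 where c1: "c1 \<noteq> 0" "E n h ((pd v ^^ g v) (foldr (\<lambda>v. pd v ^^ g v) vs Q)) =
     smul c1 (E n (h + Poly_Mapping.single v (g v)) (foldr (\<lambda>v. pd v ^^ g v) vs Q))"
    using E_funpow_high Cons.prems by (meson list.set_intros(1))
  obtain c2 where c2: "c2 \<noteq> 0" "E n (h + Poly_Mapping.single v (g v)) (foldr (\<lambda>v. pd v ^^ g v) vs Q) =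
     smul c2 (E n (h + Poly_Mapping.single v (g v) + (\<Sum>v\<leftarrow>vs. Poly_Mapping.single v (g v))) Q)"
    using Cons by auto
  show ?case using c1 c2 by (intro exI[of _ "c1 * c2"]) (simp add: smul_smul add.assoc)
qed

lemma keys_sum_single: "distinct (vs :: var list) \<Longrightarrow> set vs = Poly_Mapping.keys \<alpha> \<Longrightarrow>
   (\<Sum>v\<leftarrow>vs. Poly_Mapping.single v (Poly_Mapping.lookup \<alpha> v)) = (\<alpha> :: mono)"
proof -
  assume a: "distinct vs" "set vs = Poly_Mapping.keys \<alpha>"
  have "(\<Sum>v\<leftarrow>vs. Poly_Mapping.single v (Poly_Mapping.lookup \<alpha> v)) = (\<Sum>v\<in>Poly_Mapping.keys \<alpha>. Poly_Mapping.single v (Poly_Mapping.lookup \<alpha> v))"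
    using a by (simp add: sum_list_distinct_conv_sum_set)
  also have "\<dots> = \<alpha>"
  proof (intro poly_mapping_eqI)
    fix w
    show "Poly_Mapping.lookup (\<Sum>v\<in>Poly_Mapping.keys \<alpha>. Poly_Mapping.single v (Poly_Mapping.lookup \<alpha> v)) w = Poly_Mapping.lookup \<alpha> w"
      by (cases "w \<in> Poly_Mapping.keys \<alpha>") (auto simp: lookup_sum lookup_single when_def in_keys_iff)
  qed
  finally show ?thesis .
qed

lemma pdiff_list: "\<exists>vs. distinct vs \<and> set vs = Poly_Mapping.keys \<alpha> \<and>
   (\<forall>Q. pdiff \<alpha> Q = foldr (\<lambda>v. pd v ^^ Poly_Mapping.lookup \<alpha> v) vs Q)"
proof -
  have ex: "\<exists>vs. distinct vs \<and> set vs = Poly_Mapping.keys \<alpha>"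
    using finite_distinct_list[of "Poly_Mapping.keys \<alpha>"] by auto
  let ?vs = "SOME vs. distinct vs \<and> set vs = Poly_Mapping.keys \<alpha>"
  have "distinct ?vs \<and> set ?vs = Poly_Mapping.keys \<alpha>" by (rule someI_ex[OF ex])
  then show ?thesis unfolding pdiff_def by blast
qed

lemma E_pdiff_high: "(\<forall>v\<in>Poly_Mapping.keys \<alpha>. \<not> var_idx v < n) \<Longrightarrow>
   \<exists>c. c \<noteq> 0 \<and> E n h (pdiff \<alpha> Q) = smul c (E n (h + \<alpha>) Q)"
proof -
  assume a: "\<forall>v\<in>Poly_Mapping.keys \<alpha>. \<not> var_idx v < n"
  obtain vs where vs: "distinct vs" "set vs = Poly_Mapping.keys \<alpha>"
    "\<And>Q. pdiff \<alpha> Q = foldr (\<lambda>v. pd v ^^ Poly_Mapping.lookup \<alpha> v) vs Q"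
    using pdiff_list[of \<alpha>] by blast
  show ?thesis using E_foldr_high[of vs n h "Poly_Mapping.lookup \<alpha>" Q] vs a keys_sum_single[OF vs(1,2)] by auto
qed

lemma E_pdiff_low: "(\<forall>v\<in>Poly_Mapping.keys \<alpha>. var_idx v < n) \<Longrightarrow> highm n h = h \<Longrightarrow>
   E n h (pdiff \<alpha> Q) = pdiff \<alpha> (E n h Q)"
proof -
  assume a: "\<forall>v\<in>Poly_Mapping.keys \<alpha>. var_idx v < n" "highm n h = h"
  obtain vs where vs: "distinct vs" "set vs = Poly_Mapping.keys \<alpha>"
    "\<And>Q. pdiff \<alpha> Q = foldr (\<lambda>v. pd v ^^ Poly_Mapping.lookup \<alpha> v) vs Q"
    using pdiff_list[of \<alpha>] by blast
  have "\<forall>v\<in>set vs. var_idx v < n" using vs a by auto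
  then have "E n h (foldr (\<lambda>v. pd v ^^ Poly_Mapping.lookup \<alpha> v) vs Q) = foldr (\<lambda>v. pd v ^^ Poly_Mapping.lookup \<alpha> v) vs (E n h Q)"
  proof (induction vs arbitrary: Q)
    case (Cons v vs)
    then show ?case using comm_funpow[of "E n h" "pd v", OF E_pd_low[OF _ a(2)]] by simp
  qed simp
  then show ?thesis using vs(3) by simp
qed

lemma E_apply_op: "P \<in> polys n \<Longrightarrow> highm n h = h \<Longrightarrow> E n h (apply_op P Q) = apply_op P (E n h Q)"
  unfolding apply_op_def lin_sum[OF lin_E]
  using lin_E[unfolded lin_def] E_pdiff_low by (auto simp: polys_def intro!: sum.cong)

lemma E_zero_crit: "(\<And>h. highm n h = h \<Longrightarrow> E n h Q = 0) \<Longrightarrow> Q = 0"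
proof (intro poly_mapping_eqI)
  fix m assume a: "\<And>h. highm n h = h \<Longrightarrow> E n h Q = 0"
  have "E n (highm n m) Q = 0" by (rule a[OF highm_highm])
  then have "Poly_Mapping.lookup (E n (highm n m) Q) (lowm n m) = 0" by simp
  then show "Poly_Mapping.lookup Q m = Poly_Mapping.lookup 0 m"
    unfolding lookup_E highm_lowm low_high by simp
qed


lemma cell_less_swap: "cell_less c d \<longleftrightarrow> prod.swap c < prod.swap d"
  by (cases c; cases d) (auto simp: cell_less_def)

lemma sorted_cell_swap: "sorted_wrt cell_less xs \<longleftrightarrow> sorted_wrt (<) (map prod.swap xs)"
proof -
  have "cell_less = (\<lambda>x y. prod.swap x < prod.swap y)" by (auto simp: fun_eq_iff cell_less_swap)
  then show ?thesis by (simp add: sorted_wrt_map)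
qed

lemma sorted_cell_distinct: "sorted_wrt cell_less xs \<Longrightarrow> distinct xs"
  unfolding sorted_cell_swap using strict_sorted_iff distinct_map by blast

lemma sorted_cell_unique: "sorted_wrt cell_less xs \<Longrightarrow> sorted_wrt cell_less ys \<Longrightarrow> set xs = set ys \<Longrightarrow> xs = ys"
proof -
  assume a: "sorted_wrt cell_less xs" "sorted_wrt cell_less ys" "set xs = set ys"
  have "map prod.swap xs = map prod.swap ys"
    using a unfolding sorted_cell_swap by (intro strict_sorted_equal) auto
  then show "xs = ys" by (simp add: inj_map_eq_map)
qed

lemma cells_sorted_eq: "sorted_wrt cell_less xs \<Longrightarrow> cells_sorted (set xs) = xs"
  unfolding cells_sorted_def
  by (rule the_equality) (auto intro: sorted_cell_distinct sorted_cell_unique)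

lemma cells_sorted_exists: "finite L \<Longrightarrow> \<exists>xs. sorted_wrt cell_less xs \<and> set xs = L"
proof -
  assume f: "finite L"
  let ?xs = "map prod.swap (sorted_list_of_set (prod.swap ` L))"
  have "sorted_wrt cell_less ?xs"
    unfolding sorted_cell_swap by (simp add: comp_def)
  moreover have "set ?xs = L" using f by (force simp: image_image)
  ultimately show ?thesis by blast
qed

lemma cells_sorted_props: "finite L \<Longrightarrow> sorted_wrt cell_less (cells_sorted L) \<and> set (cells_sorted L) = L \<and> distinct (cells_sorted L)"
  using cells_sorted_exists cells_sorted_eq sorted_cell_distinct by metis

definition tm :: "(nat \<times> nat) list \<Rightarrow> (nat \<Rightarrow> nat) \<Rightarrow> nat \<Rightarrow> mono" where
  "tm ws \<sigma> r = Poly_Mapping.single (X r) (fst (ws ! \<sigma> r)) + Poly_Mapping.single (Y r) (snd (ws ! \<sigma> r))"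

lemma Delta_sorted: "sorted_wrt cell_less ws \<Longrightarrow> Delta (set ws) =
  (\<Sum>\<sigma>\<in>{\<sigma>. \<sigma> permutes {0..<length ws}}. Poly_Mapping.single (\<Sum>r<length ws. tm ws \<sigma> r) (of_int (sign \<sigma>)))"
  unfolding Delta_def cells_sorted_eq Let_def tm_def by simp

lemma core_comb:
  fixes ws :: "(nat \<times> nat) list" and n k :: nat and p :: "nat \<Rightarrow> nat"
  assumes ws: "sorted_wrt cell_less ws" "length ws = n + k"
    and p: "inj_on p {..<k}" "p ` {..<k} \<subseteq> {..<n+k}"
  shows "\<exists>\<epsilon>. (\<epsilon> = 1 \<or> \<epsilon> = -1) \<and>
    (\<Sum>\<sigma>\<in>{\<sigma>. \<sigma> permutes {0..<n+k} \<and> (\<forall>t<k. \<sigma> (n+t) = p t)}.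
        Poly_Mapping.single (\<Sum>r<n. tm ws \<sigma> r) (of_int (sign \<sigma>)))
    = smul \<epsilon> (Delta (set ws - (\<lambda>t. ws ! p t) ` {..<k}))"
proof -
  define N where "N = n + k"
  define F where "F = (\<lambda>t. ws ! p t) ` {..<k}"
  define S where "S = filter (\<lambda>i. i \<notin> p ` {..<k}) [0..<N]"
  have dws: "distinct ws" using ws(1) by (rule sorted_cell_distinct)
  have distS: "distinct S" unfolding S_def by simp
  have setS: "set S = {0..<N} - p ` {..<k}" unfolding S_def by auto
  have cardp: "card (p ` {..<k}) = k" using p(1) by (simp add: card_image)
  have lenS: "length S = n"
  proof -
    have "length S = card (set S)" using distS by (simp add: distinct_card)
    also have "\<dots> = N - k" unfolding setS using p(2) cardp N_def
      by (subst card_Diff_subset) (auto)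
    finally show ?thesis unfolding N_def by simp
  qed
  define ds where "ds = filter (\<lambda>c. c \<notin> F) ws"
  have ds_sorted: "sorted_wrt cell_less ds" unfolding ds_def using ws(1) by (simp add: sorted_wrt_filter)
  have ds_set: "set ds = set ws - F" unfolding ds_def by auto
  have inF: "ws ! i \<in> F \<longleftrightarrow> i \<in> p ` {..<k}" if "i < N" for i
  proof
    assume "ws ! i \<in> F"
    then obtain t where t: "t < k" "ws ! i = ws ! p t" unfolding F_def by auto
    then have "p t < N" using p(2) N_def by auto
    then have "i = p t" using t dws that ws(2) N_def by (simp add: nth_eq_iff_index_eq)
    then show "i \<in> p ` {..<k}" using t by auto
  qed (auto simp: F_def)
  have ds_eq: "ds = map (nth ws) S"
  proof -
    have mw: "map (nth ws) [0..<N] = ws" using map_nth[of ws] ws(2) N_def by simp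
    have "ds = filter (\<lambda>c. c \<notin> F) (map (nth ws) [0..<N])" unfolding ds_def mw ..
    also have "\<dots> = map (nth ws) (filter (\<lambda>i. ws ! i \<notin> F) [0..<N])" by (simp add: filter_map comp_def)
    also have "filter (\<lambda>i. ws ! i \<notin> F) [0..<N] = S" unfolding S_def
      by (rule filter_cong) (auto simp: inF)
    finally show ?thesis .
  qed
  have lends: "length ds = n" using ds_eq lenS by simp
  have dsnth: "ds ! r = ws ! (S ! r)" if "r < n" for r using ds_eq that lenS by simp
  define \<rho> where "\<rho> r = (if r < n then S ! r else if r < N then p (r - n) else r)" for r
  have Sr: "S ! r \<in> {0..<N} - p ` {..<k}" if "r < n" for r using setS lenS that nth_mem by blast
  have rho_perm: "\<rho> permutes {0..<N}"
  proof (rule bij_imp_permutes)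
    have sub: "\<rho> ` {0..<N} \<subseteq> {0..<N}"
    proof
      fix y assume "y \<in> \<rho> ` {0..<N}"
      then obtain r where r: "r < N" "y = \<rho> r" by auto
      show "y \<in> {0..<N}"
      proof (cases "r < n")
        case True then show ?thesis using Sr r by (auto simp: \<rho>_def)
      next
        case False
        then have "r - n < k" using r N_def by simp
        then have "p (r - n) < N" using p(2) N_def by auto
        then show ?thesis using False r by (auto simp: \<rho>_def)
      qed
    qed
    have inj: "inj_on \<rho> {0..<N}"
    proof (rule inj_onI)
      fix x y assume xy: "x \<in> {0..<N}" "y \<in> {0..<N}" "\<rho> x = \<rho> y"
      show "x = y"
      proof (cases "x < n"; cases "y < n")
        assume "x < n" "y < n"
        then show ?thesis using xy distS lenS by (simp add: \<rho>_def nth_eq_iff_index_eq)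
      next
        assume a: "x < n" "\<not> y < n"
        then have "y - n < k" "y < N" using xy N_def by auto
        then have "\<rho> y \<in> p ` {..<k}" using a by (auto simp: \<rho>_def)
        moreover have "\<rho> x \<notin> p ` {..<k}" using Sr[OF a(1)] by (simp add: \<rho>_def a)
        ultimately show ?thesis using xy by simp
      next
        assume a: "\<not> x < n" "y < n"
        then have "x - n < k" "x < N" using xy N_def by auto
        then have "\<rho> x \<in> p ` {..<k}" using a by (auto simp: \<rho>_def)
        moreover have "\<rho> y \<notin> p ` {..<k}" using Sr[OF a(2)] by (simp add: \<rho>_def a)
        ultimately show ?thesis using xy by simp
      next
        assume a: "\<not> x < n" "\<not> y < n"
        then have "p (x - n) = p (y - n)" using xy by (simp add: \<rho>_def)
        then have "x - n = y - n" using p(1) xy a N_def by (auto dest: inj_onD)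
        then show ?thesis using a by simp
      qed
    qed
    then show "bij_betw \<rho> {0..<N} {0..<N}"
      unfolding bij_betw_def using endo_inj_surj[OF _ sub inj] by simp
  qed (auto simp: \<rho>_def N_def)
  have rho_nt: "\<rho> (n + t) = p t" if "t < k" for t using that N_def by (simp add: \<rho>_def)
  define A where "A = {\<tau>. \<tau> permutes {0..<n}}"
  define B where "B = {\<sigma>. \<sigma> permutes {0..<n+k} \<and> (\<forall>t<k. \<sigma> (n+t) = p t)}"
  define g where "g \<sigma> = Poly_Mapping.single (\<Sum>r<n. tm ws \<sigma> r) (of_int (sign \<sigma>) :: rat)" for \<sigma>
  define h where "h \<tau> = smul (of_int (sign \<rho>)) (Poly_Mapping.single (\<Sum>r<n. tm ds \<tau> r) (of_int (sign \<tau>)))" for \<tau>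
  have "sum h A = sum g B"
  proof (rule sum.reindex_bij_witness[where i = "\<lambda>\<sigma>. inv \<rho> \<circ> \<sigma>" and j = "\<lambda>\<tau>. \<rho> \<circ> \<tau>"])
    fix \<tau> assume "\<tau> \<in> A"
    then have tau: "\<tau> permutes {0..<n}" unfolding A_def by simp
    show "inv \<rho> \<circ> (\<rho> \<circ> \<tau>) = \<tau>" using permutes_inverses(2)[OF rho_perm] by (simp add: fun_eq_iff)
    have t2: "\<tau> permutes {0..<N}" using tau by (rule permutes_subset) (auto simp: N_def)
    have "\<tau> (n + t) = n + t" for t using tau by (intro permutes_not_in) auto
    then show "\<rho> \<circ> \<tau> \<in> B" unfolding B_def using permutes_compose[OF t2 rho_perm] rho_nt N_def by simp
    have tl: "\<tau> r < n" if "r < n" for r using permutes_in_image[OF tau] that by simp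
    have sg: "sign (\<rho> \<circ> \<tau>) = sign \<rho> * sign \<tau>"
      by (rule sign_compose) (use rho_perm tau in \<open>auto simp: permutation_permutes\<close>)
    have "(\<Sum>r<n. tm ws (\<rho> \<circ> \<tau>) r) = (\<Sum>r<n. tm ds \<tau> r)"
      by (rule sum.cong) (auto simp: tm_def \<rho>_def tl dsnth)
    then show "g (\<rho> \<circ> \<tau>) = h \<tau>" unfolding g_def h_def by (simp add: sg smul_single)
  next
    fix \<sigma> assume "\<sigma> \<in> B"
    then have sig: "\<sigma> permutes {0..<N}" "\<And>t. t < k \<Longrightarrow> \<sigma> (n+t) = p t" unfolding B_def N_def by auto
    show "\<rho> \<circ> (inv \<rho> \<circ> \<sigma>) = \<sigma>" using permutes_inverses(1)[OF rho_perm] by (simp add: fun_eq_iff)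
    have ip: "inv \<rho> \<circ> \<sigma> permutes {0..<N}" using permutes_compose[OF sig(1) permutes_inv[OF rho_perm]] .
    show "inv \<rho> \<circ> \<sigma> \<in> A" unfolding A_def
    proof (simp, rule permutes_superset[OF ip])
      fix x assume "x \<in> {0..<N} - {0..<n}"
      then obtain t where t: "t < k" "x = n + t" using N_def by (metis Diff_iff atLeastLessThan_iff le_Suc_ex add_less_cancel_left not_le)
      show "(inv \<rho> \<circ> \<sigma>) x = x" using t sig(2)[OF t(1)] rho_nt[OF t(1)] permutes_inverses(2)[OF rho_perm] by (metis comp_apply)
    qed
  qed
  then have "sum g B = sum h A" ..
  also have "sum h A = smul (of_int (sign \<rho>)) (Delta (set ws - F))"
  proof -
    have "Delta (set ws - F) = (\<Sum>\<tau>\<in>A. Poly_Mapping.single (\<Sum>r<n. tm ds \<tau> r) (of_int (sign \<tau>)))"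
      unfolding ds_set[symmetric] Delta_sorted[OF ds_sorted] lends A_def ..
    then show ?thesis unfolding h_def by (simp add: smul_sum)
  qed
  finally have "sum g B = smul (of_int (sign \<rho>)) (Delta (set ws - F))" .
  moreover have "of_int (sign \<rho>) = (1::rat) \<or> of_int (sign \<rho>) = (-1::rat)" by (simp add: sign_def)
  ultimately show ?thesis unfolding g_def B_def F_def by blast
qed


definition hm :: "nat \<Rightarrow> nat \<Rightarrow> (nat \<Rightarrow> nat) \<Rightarrow> (nat \<Rightarrow> nat) \<Rightarrow> mono" where
  "hm n k a b = (\<Sum>t<k. Poly_Mapping.single (X (n + t)) (a t) + Poly_Mapping.single (Y (n + t)) (b t))"

lemma lookup_hm_X: "Poly_Mapping.lookup (hm n k a b) (X (n + s)) = (if s < k then a s else 0)"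
  by (simp add: hm_def lookup_sum lookup_add lookup_single when_def)
lemma lookup_hm_Y: "Poly_Mapping.lookup (hm n k a b) (Y (n + s)) = (if s < k then b s else 0)"
  by (simp add: hm_def lookup_sum lookup_add lookup_single when_def)
lemma lookup_hm_low: "var_idx v < n \<Longrightarrow> Poly_Mapping.lookup (hm n k a b) v = 0"
  by (auto simp: hm_def lookup_sum lookup_add lookup_single when_def intro!: sum.neutral)

lemma hm_eq_iff: "hm n k a b = hm n k a' b' \<longleftrightarrow> (\<forall>t<k. a t = a' t \<and> b t = b' t)"
proof
  assume e: "hm n k a b = hm n k a' b'"
  show "\<forall>t<k. a t = a' t \<and> b t = b' t"
  proof (intro allI impI conjI)
    fix t assume "t < k"
    then show "a t = a' t" using arg_cong[OF e, of "\<lambda>m. Poly_Mapping.lookup m (X (n+t))"] by (simp add: lookup_hm_X)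
    show "b t = b' t" using \<open>t < k\<close> arg_cong[OF e, of "\<lambda>m. Poly_Mapping.lookup m (Y (n+t))"] by (simp add: lookup_hm_Y)
  qed
next
  assume "\<forall>t<k. a t = a' t \<and> b t = b' t"
  then show "hm n k a b = hm n k a' b'" unfolding hm_def by (intro sum.cong) auto
qed

lemma highm_hm: "highm n (hm n k a b) = hm n k a b"
  by (intro poly_mapping_eqI) (simp add: lookup_highm lookup_hm_low)

lemma shift_mono_hm: "shift_mono n cs = hm n (length cs) (\<lambda>t. fst (cs ! t)) (\<lambda>t. snd (cs ! t))"
  unfolding shift_mono_def hm_def ..

lemma highm_tm: "highm n (tm ws \<sigma> r) = (if r < n then 0 else tm ws \<sigma> r)"
  by (simp add: tm_def highm_add highm_single)
lemma lowm_tm: "lowm n (tm ws \<sigma> r) = (if r < n then tm ws \<sigma> r else 0)"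
  by (simp add: tm_def lowm_add lowm_single)

lemma sum_split_nk: "(\<Sum>r<n+(k::nat). f r) = (\<Sum>r<n. f r) + (\<Sum>t<k. f (n + t))"
  by (induction k) (simp_all add: add.assoc)

lemma high_mono: "highm n (\<Sum>r<n+k. tm ws \<sigma> r) = hm n k (\<lambda>t. fst (ws ! \<sigma> (n+t))) (\<lambda>t. snd (ws ! \<sigma> (n+t)))"
  unfolding sum_split_nk highm_add highm_sum highm_tm by (simp add: hm_def tm_def)

lemma low_mono: "lowm n (\<Sum>r<n+k. tm ws \<sigma> r) = (\<Sum>r<n. tm ws \<sigma> r)"
  unfolding sum_split_nk lowm_add lowm_sum lowm_tm by simp

lemma high_mono_iff:
  assumes "\<sigma> permutes {0..<n+k}" "distinct ws" "length ws = n + k" "\<forall>t<k. p t < n + k"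
  shows "highm n (\<Sum>r<n+k. tm ws \<sigma> r) = hm n k (\<lambda>t. fst (ws ! p t)) (\<lambda>t. snd (ws ! p t))
         \<longleftrightarrow> (\<forall>t<k. \<sigma> (n+t) = p t)"
proof -
  have "\<sigma> (n+t) < n + k" if "t < k" for t using permutes_in_image[OF assms(1)] that by simp
  then have "\<forall>t<k. (ws ! \<sigma> (n + t) = ws ! p t) = (\<sigma> (n+t) = p t)"
    using assms(2-4) by (simp add: nth_eq_iff_index_eq)
  then have "\<forall>t<k. (fst (ws ! \<sigma> (n + t)) = fst (ws ! p t) \<and> snd (ws ! \<sigma> (n + t)) = snd (ws ! p t)) = (\<sigma> (n+t) = p t)"
    by (simp add: prod_eq_iff)
  then show ?thesis unfolding high_mono hm_eq_iff by auto
qed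

lemma qspan_sub: "x \<in> S \<Longrightarrow> x \<in> qspan S"
  unfolding qspan_def by (rule CollectI, rule exI[of _ "{x}"], rule exI[of _ "\<lambda>_. 1"]) simp

lemma qspan_kill: "(\<forall>q\<in>S. apply_op P q = 0) \<Longrightarrow> Q \<in> qspan S \<Longrightarrow> apply_op P Q = 0"
proof -
  assume a: "\<forall>q\<in>S. apply_op P q = 0" "Q \<in> qspan S"
  then obtain F c where F: "Q = (\<Sum>q\<in>F. smul (c q) q)" "F \<subseteq> S" unfolding qspan_def by auto
  have "apply_op P Q = (\<Sum>q\<in>F. apply_op P (smul (c q) q))" unfolding F lin_sum[OF lin_apply_op] ..
  also have "\<dots> = (\<Sum>q\<in>F. smul (c q) (apply_op P q))" using lin_apply_op[unfolded lin_def] by simp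
  also have "\<dots> = 0" using a(1) F(2) by (intro sum.neutral) auto
  finally show ?thesis .
qed

lemma card_ferrers: "finite (ferrers \<mu>) \<and> card (ferrers \<mu>) = sum_list \<mu>"
proof -
  have e: "ferrers \<mu> = Sigma {..<length \<mu>} (\<lambda>a. {..<\<mu> ! a})" unfolding ferrers_def by auto
  show ?thesis unfolding e by (simp add: sum_list_sum_nth atLeast0LessThan)
qed

lemma smul_eq_zero: "c \<noteq> 0 \<Longrightarrow> smul c x = 0 \<Longrightarrow> x = 0"
  by (intro poly_mapping_eqI) (metis lookup_smul lookup_zero mult_eq_0_iff)


lemma Delta_E:
  assumes ws: "sorted_wrt cell_less ws" "length ws = n + k" and hh: "highm n h = h"
  shows "E n h (Delta (set ws)) = (\<Sum>\<sigma>\<in>{\<sigma>. \<sigma> permutes {0..<n+k} \<and> highm n (\<Sum>r<n+k. tm ws \<sigma> r) = h}.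
            Poly_Mapping.single (\<Sum>r<n. tm ws \<sigma> r) (of_int (sign \<sigma>)))"
proof -
  have fin: "finite {\<sigma>. \<sigma> permutes {0..<n+k}}" by (rule finite_permutations) simp
  have "E n h (Delta (set ws)) = (\<Sum>\<sigma>\<in>{\<sigma>. \<sigma> permutes {0..<n+k}}. E n h (Poly_Mapping.single (\<Sum>r<n+k. tm ws \<sigma> r) (of_int (sign \<sigma>))))"
    unfolding Delta_sorted[OF ws(1)] ws(2) lin_sum[OF lin_E] ..
  also have "\<dots> = (\<Sum>\<sigma>\<in>{\<sigma>. \<sigma> permutes {0..<n+k}}. if highm n (\<Sum>r<n+k. tm ws \<sigma> r) = h then
        Poly_Mapping.single (\<Sum>r<n. tm ws \<sigma> r) (of_int (sign \<sigma>)) else 0)"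
    by (intro sum.cong refl) (simp add: E_single[OF hh] low_mono)
  also have "\<dots> = (\<Sum>\<sigma>\<in>{\<sigma>. \<sigma> permutes {0..<n+k} \<and> highm n (\<Sum>r<n+k. tm ws \<sigma> r) = h}.
            Poly_Mapping.single (\<Sum>r<n. tm ws \<sigma> r) (of_int (sign \<sigma>)))"
    using fin by (simp add: sum.inter_filter[symmetric] conj_commute)
  finally show ?thesis .
qed

theorem mainTheorem4:
  fixes \<mu> :: "nat list" and n k i j :: nat
  assumes "is_partition \<mu>" and "sum_list \<mu> = n + k" and "(i, j) \<in> ferrers \<mu>"
  shows "Ik \<mu> n k i j =
    (\<Inter> {I_of (n + k) (pdiff (shift_mono n cs) (Delta (ferrers \<mu>))) | cs.
             length cs = k \<and> distinct cs \<and> set cs \<subseteq> shadow \<mu> i j \<and> sorted_wrt cell_less cs})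
    \<inter> polys n"
proof -
  define L where "L = ferrers \<mu>"
  define N where "N = n + k"
  have finL: "finite L" and cardL: "card L = N" using card_ferrers[of \<mu>] assms(2) unfolding L_def N_def by auto
  define ws where "ws = cells_sorted L"
  have ws: "sorted_wrt cell_less ws" "set ws = L" "distinct ws"
    using cells_sorted_props[OF finL] unfolding ws_def by auto
  have lenws: "length ws = n + k" using ws cardL N_def distinct_card by metis
  have shL: "shadow \<mu> i j \<subseteq> L" unfolding shadow_def L_def by auto
  define cond where "cond cs \<longleftrightarrow> length cs = k \<and> distinct cs \<and> set cs \<subseteq> shadow \<mu> i j \<and> sorted_wrt cell_less cs" for cs :: "(nat \<times> nat) list"
  define G where "G h = {\<sigma>. \<sigma> permutes {0..<n+k} \<and> highm n (\<Sum>r<n+k. tm ws \<sigma> r) = h}" for h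
  have polysN: "polys n \<subseteq> polys (n+k)" unfolding polys_def by fastforce
  have A: "P \<in> Ik \<mu> n k i j \<longleftrightarrow> (\<forall>C. C \<subseteq> shadow \<mu> i j \<and> card C = k \<longrightarrow> apply_op P (Delta (L - C)) = 0)"
    if P: "P \<in> polys n" for P
  proof
    assume "P \<in> Ik \<mu> n k i j"
    then have kill: "\<forall>Q\<in>Mk \<mu> k i j. apply_op P Q = 0" unfolding Ik_def by auto
    show "\<forall>C. C \<subseteq> shadow \<mu> i j \<and> card C = k \<longrightarrow> apply_op P (Delta (L - C)) = 0"
    proof (intro allI impI)
      fix C assume C: "C \<subseteq> shadow \<mu> i j \<and> card C = k"
      have "Delta (L - C) \<in> M (ferrers \<mu> - C)" unfolding M_def L_def by (intro qspan_sub derivs.self)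
      then have "Delta (L - C) \<in> Mk \<mu> k i j" unfolding Mk_def using C by (intro qspan_sub) blast
      then show "apply_op P (Delta (L - C)) = 0" using kill by blast
    qed
  next
    assume h: "\<forall>C. C \<subseteq> shadow \<mu> i j \<and> card C = k \<longrightarrow> apply_op P (Delta (L - C)) = 0"
    have "\<forall>q\<in>\<Union> {M (ferrers \<mu> - C) | C. C \<subseteq> shadow \<mu> i j \<and> card C = k}. apply_op P q = 0"
    proof
      fix q assume "q \<in> \<Union> {M (ferrers \<mu> - C) | C. C \<subseteq> shadow \<mu> i j \<and> card C = k}"
      then obtain C where C: "C \<subseteq> shadow \<mu> i j \<and> card C = k" "q \<in> M (ferrers \<mu> - C)" by blast
      have "\<forall>d\<in>derivs (Delta (L - C)). apply_op P d = 0" using h C(1) kills_iff by blast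
      then show "apply_op P q = 0" using C(2) unfolding M_def L_def by (rule qspan_kill)
    qed
    then have "\<forall>Q\<in>Mk \<mu> k i j. apply_op P Q = 0" unfolding Mk_def using qspan_kill by blast
    then show "P \<in> Ik \<mu> n k i j" unfolding Ik_def using P by blast
  qed
  have B: "P \<in> \<Inter> {I_of (n + k) (pdiff (shift_mono n cs) (Delta (ferrers \<mu>))) | cs. cond cs} \<longleftrightarrow>
      (\<forall>cs. cond cs \<longrightarrow> apply_op P (pdiff (shift_mono n cs) (Delta L)) = 0)"
    if P: "P \<in> polys n" for P
    using P polysN unfolding I_of_def L_def kills_iff by blast
  have C: "(\<forall>C. C \<subseteq> shadow \<mu> i j \<and> card C = k \<longrightarrow> apply_op P (Delta (L - C)) = 0) \<longleftrightarrow>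
      (\<forall>cs. cond cs \<longrightarrow> apply_op P (pdiff (shift_mono n cs) (Delta L)) = 0)"
    if P: "P \<in> polys n" for P
  proof -
    define Qp where "Qp = apply_op P (Delta L)"
    have EQ: "E n h Qp = apply_op P (\<Sum>\<sigma>\<in>G h. Poly_Mapping.single (\<Sum>r<n. tm ws \<sigma> r) (of_int (sign \<sigma>)))"
      if "highm n h = h" for h
      unfolding Qp_def E_apply_op[OF P that] G_def Delta_E[OF ws(1) lenws that, unfolded ws(2)] ..
    have shigh: "\<forall>v\<in>Poly_Mapping.keys (shift_mono n cs). \<not> var_idx v < n" for cs
      unfolding shift_mono_hm using lookup_hm_low by (metis in_keys_iff)
    have Gp: "G (hm n k (\<lambda>t. fst (ws ! p t)) (\<lambda>t. snd (ws ! p t))) =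
         {\<sigma>. \<sigma> permutes {0..<n+k} \<and> (\<forall>t<k. \<sigma> (n+t) = p t)}"
      if "\<forall>t<k. p t < n + k" for p
      unfolding G_def using high_mono_iff[OF _ ws(3) lenws that] by blast
    show ?thesis
    proof
      assume hC: "\<forall>C. C \<subseteq> shadow \<mu> i j \<and> card C = k \<longrightarrow> apply_op P (Delta (L - C)) = 0"
      show "\<forall>cs. cond cs \<longrightarrow> apply_op P (pdiff (shift_mono n cs) (Delta L)) = 0"
      proof (intro allI impI)
        fix cs assume cs: "cond cs"
        define s where "s = shift_mono n cs"
        have "pdiff s Qp = 0"
        proof (rule E_zero_crit)
          fix h assume hh: "highm n h = h"
          obtain c where c: "E n h (pdiff s Qp) = smul c (E n (h + s) Qp)"
            using E_pdiff_high[OF shigh[of cs]] unfolding s_def by blast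
          have hs: "highm n (h + s) = h + s" unfolding highm_add hh s_def shift_mono_hm highm_hm ..
          have "E n (h + s) Qp = 0"
          proof (cases "G (h + s) = {}")
            case True
            then show ?thesis unfolding EQ[OF hs] using lin_zero[OF lin_apply_op] by simp
          next
            case False
            then obtain \<sigma>0 where s0: "\<sigma>0 permutes {0..<n+k}" "highm n (\<Sum>r<n+k. tm ws \<sigma>0 r) = h + s"
              unfolding G_def by auto
            define p where "p t = \<sigma>0 (n + t)" for t
            have pN: "\<forall>t<k. p t < n + k" unfolding p_def using permutes_in_image[OF s0(1)] by simp
            have pinj: "inj_on p {..<k}" unfolding p_def using permutes_inj[OF s0(1)]
              by (auto intro!: inj_onI dest: injD)
            have pim: "p ` {..<k} \<subseteq> {..<n+k}" using pN by auto
            have hse: "h + s = hm n k (\<lambda>t. fst (ws ! p t)) (\<lambda>t. snd (ws ! p t))"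
              using s0(2) unfolding high_mono p_def by simp
            obtain \<epsilon> where eps: "\<epsilon> = 1 \<or> \<epsilon> = -1"
              "(\<Sum>\<sigma>\<in>{\<sigma>. \<sigma> permutes {0..<n+k} \<and> (\<forall>t<k. \<sigma> (n+t) = p t)}.
                 Poly_Mapping.single (\<Sum>r<n. tm ws \<sigma> r) (of_int (sign \<sigma>)))
               = smul \<epsilon> (Delta (set ws - (\<lambda>t. ws ! p t) ` {..<k}))"
              using core_comb[OF ws(1) lenws pinj pim] by blast
            define F where "F = (\<lambda>t. ws ! p t) ` {..<k}"
            have Fsh: "F \<subseteq> shadow \<mu> i j"
            proof
              fix x assume "x \<in> F"
              then obtain t where t: "t < k" "x = ws ! p t" unfolding F_def by auto
              have xL: "x \<in> L" using t pN ws(2) lenws by auto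
              have cst: "cs ! t \<in> shadow \<mu> i j" using cs t unfolding cond_def by auto
              have "Poly_Mapping.lookup (h + s) (X (n + t)) = fst x"
                unfolding hse lookup_hm_X using t by simp
              moreover have "Poly_Mapping.lookup s (X (n + t)) = fst (cs ! t)"
                unfolding s_def shift_mono_hm lookup_hm_X using t cs unfolding cond_def by simp
              ultimately have 1: "fst (cs ! t) \<le> fst x" by (simp add: lookup_add)
              have "Poly_Mapping.lookup (h + s) (Y (n + t)) = snd x"
                unfolding hse lookup_hm_Y using t by simp
              moreover have "Poly_Mapping.lookup s (Y (n + t)) = snd (cs ! t)"
                unfolding s_def shift_mono_hm lookup_hm_Y using t cs unfolding cond_def by simp
              ultimately have 2: "snd (cs ! t) \<le> snd x" by (simp add: lookup_add)
              show "x \<in> shadow \<mu> i j" using xL 1 2 cst unfolding shadow_def L_def by (cases x) auto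
            qed
            have cF: "card F = k"
            proof -
              have "inj_on (\<lambda>t. ws ! p t) {..<k}"
                using pinj pN ws(3) lenws by (auto intro!: inj_onI simp: nth_eq_iff_index_eq dest: inj_onD)
              then show ?thesis unfolding F_def by (simp add: card_image)
            qed
            have "apply_op P (Delta (L - F)) = 0" using hC Fsh cF by blast
            moreover have "E n (h + s) Qp = apply_op P (smul \<epsilon> (Delta (L - F)))"
              unfolding EQ[OF hs] unfolding hse Gp[OF pN] eps(2) F_def[symmetric] ws(2) ..
            moreover have "apply_op P (smul \<epsilon> (Delta (L - F))) = smul \<epsilon> (apply_op P (Delta (L - F)))"
              using lin_apply_op unfolding lin_def by blast
            ultimately show ?thesis by simp
          qed
          then show "E n h (pdiff s Qp) = 0" unfolding c by simp
        qed
        then show "apply_op P (pdiff (shift_mono n cs) (Delta L)) = 0"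
          unfolding apply_op_pdiff Qp_def s_def .
      qed
    next
      assume hcs: "\<forall>cs. cond cs \<longrightarrow> apply_op P (pdiff (shift_mono n cs) (Delta L)) = 0"
      show "\<forall>C. C \<subseteq> shadow \<mu> i j \<and> card C = k \<longrightarrow> apply_op P (Delta (L - C)) = 0"
      proof (intro allI impI)
        fix C assume C: "C \<subseteq> shadow \<mu> i j \<and> card C = k"
        have "C \<subseteq> L" using C shL by blast
        then have finC: "finite C" using finL by (rule finite_subset)
        define cs where "cs = cells_sorted C"
        have csp: "sorted_wrt cell_less cs" "set cs = C" "distinct cs"
          using cells_sorted_props[OF finC] unfolding cs_def by auto
        have lencs: "length cs = k" using csp C distinct_card by metis
        have cc: "cond cs" unfolding cond_def using csp lencs C by auto
        define s where "s = shift_mono n cs"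
        have "pdiff s Qp = 0" using hcs cc unfolding s_def Qp_def apply_op_pdiff by blast
        moreover obtain c where c: "c \<noteq> 0" "E n 0 (pdiff s Qp) = smul c (E n (0 + s) Qp)"
          using E_pdiff_high[OF shigh[of cs]] unfolding s_def by blast
        ultimately have "smul c (E n s Qp) = 0" by (simp add: lin_zero[OF lin_E])
        then have Es: "E n s Qp = 0" using c(1) smul_eq_zero by blast
        have "\<forall>t. \<exists>q. t < k \<longrightarrow> q < n + k \<and> ws ! q = cs ! t"
        proof (intro allI)
          fix t
          show "\<exists>q. t < k \<longrightarrow> q < n + k \<and> ws ! q = cs ! t"
          proof (cases "t < k")
            case True
            then have "cs ! t \<in> set ws" using csp lencs C shL ws(2) by (metis nth_mem subsetD)
            then show ?thesis using lenws by (metis in_set_conv_nth)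
          qed simp
        qed
        then obtain p where p: "\<And>t. t < k \<Longrightarrow> p t < n + k \<and> ws ! p t = cs ! t" by metis
        have pN: "\<forall>t<k. p t < n + k" using p by blast
        have pinj: "inj_on p {..<k}"
        proof (rule inj_onI)
          fix x y assume "x \<in> {..<k}" "y \<in> {..<k}" "p x = p y"
          then have "cs ! x = cs ! y" using p by (metis lessThan_iff)
          then show "x = y" using csp(3) lencs \<open>x \<in> {..<k}\<close> \<open>y \<in> {..<k}\<close> by (simp add: nth_eq_iff_index_eq)
        qed
        have pim: "p ` {..<k} \<subseteq> {..<n+k}" using pN by auto
        have se: "s = hm n k (\<lambda>t. fst (ws ! p t)) (\<lambda>t. snd (ws ! p t))"
          unfolding s_def shift_mono_hm lencs hm_eq_iff using p by simp
        have hs: "highm n s = s" unfolding se highm_hm ..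
        have Feq: "(\<lambda>t. ws ! p t) ` {..<k} = C"
        proof -
          have "(\<lambda>t. ws ! p t) ` {..<k} = (\<lambda>t. cs ! t) ` {..<length cs}" using p lencs by (auto simp: image_iff)
          also have "\<dots> = set cs" by (auto simp: set_conv_nth)
          finally show ?thesis using csp(2) by simp
        qed
        obtain \<epsilon> where eps: "\<epsilon> = 1 \<or> \<epsilon> = -1"
          "(\<Sum>\<sigma>\<in>{\<sigma>. \<sigma> permutes {0..<n+k} \<and> (\<forall>t<k. \<sigma> (n+t) = p t)}.
             Poly_Mapping.single (\<Sum>r<n. tm ws \<sigma> r) (of_int (sign \<sigma>)))
           = smul \<epsilon> (Delta (set ws - (\<lambda>t. ws ! p t) ` {..<k}))"
          using core_comb[OF ws(1) lenws pinj pim] by blast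
        have "E n s Qp = apply_op P (smul \<epsilon> (Delta (L - C)))"
          unfolding EQ[OF hs] unfolding se Gp[OF pN] eps(2) Feq ws(2) ..
        moreover have "apply_op P (smul \<epsilon> (Delta (L - C))) = smul \<epsilon> (apply_op P (Delta (L - C)))"
          using lin_apply_op unfolding lin_def by blast
        ultimately have "smul \<epsilon> (apply_op P (Delta (L - C))) = 0" using Es by simp
        moreover have "\<epsilon> \<noteq> 0" using eps(1) by auto
        ultimately show "apply_op P (Delta (L - C)) = 0" using smul_eq_zero by blast
      qed
    qed
  qed
  show ?thesis
  proof (intro set_eqI iffI)
    fix P assume "P \<in> Ik \<mu> n k i j"
    moreover have Pn: "P \<in> polys n" using calculation unfolding Ik_def by simp
    ultimately show "P \<in> \<Inter> {I_of (n + k) (pdiff (shift_mono n cs) (Delta (ferrers \<mu>))) | cs.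
             length cs = k \<and> distinct cs \<and> set cs \<subseteq> shadow \<mu> i j \<and> sorted_wrt cell_less cs} \<inter> polys n"
      using A[OF Pn] B[OF Pn] C[OF Pn] unfolding cond_def by blast
  next
    fix P assume a: "P \<in> \<Inter> {I_of (n + k) (pdiff (shift_mono n cs) (Delta (ferrers \<mu>))) | cs.
             length cs = k \<and> distinct cs \<and> set cs \<subseteq> shadow \<mu> i j \<and> sorted_wrt cell_less cs} \<inter> polys n"
    then have Pn: "P \<in> polys n" by simp
    show "P \<in> Ik \<mu> n k i j"
      using a A[OF Pn] B[OF Pn] C[OF Pn] unfolding cond_def by blast
  qed
qed

end
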